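(* Assume the setting described in the context. Then for all $t\in\{1,\ldots,T\}$, $x_0,x_t\in\mathbb{R}^d$ it holds that $$p^\emptyset_{t\mid 0}(x_t\mid x_0)=\mathcal N\big(x_t,\sqrt{\bar\alpha_t}\,x_0,(1-\bar\alpha_t)\mathrm I_d\big).$$
   Context: Let $d,\mathfrak d,T\in\mathbb{N}$ and let $(\Omega,\mathcal F,\mathbb P)$ be a probability space. For every $\theta\in\mathbb{R}^{\mathfrak d}\cup\{\emptyset\}$ let $X^\theta=(X^\theta_t)_{t\in\{0,1,\ldots,T\}}$ be an $\mathbb{R}^d$-valued stochastic process on $\Omega$, and assume that $(X^\theta)_{\theta\in\mathbb{R}^{\mathfrak d}}$ and $X^\emptyset$ are independent. For every $\theta\in\mathbb{R}^{\mathfrak d}\cup\{\emptyset\}$ let $p^\theta\colon(\mathbb{R}^d)^{T+1}\to(0,\infty)$ be measurable with $\mathbb P(X^\theta_0\in B_0,\ldots,X^\theta_T\in B_T)=\int_{B_0}\cdots\int_{B_T}p^\theta(x_0,\ldots,x_T)\,dx_0\cdots dx_T$ for all Borel sets $B_0,\ldots,B_T\subseteq\mathbb{R}^d$. For distinct $a_1,\ldots,a_S\in\{0,\ldots,T\}$ ($S\le T$) let $p^\theta_{a_1,\ldots,a_S}$ be the marginal density obtained by integrating $p^\theta(x_0,\ldots,x_T)$ over the remaining variables (and $p^\theta_{0,\ldots,T}=p^\theta$); for distinct $a_1,\ldots,a_S,b_1,\ldots,b_K\in\{0,\ldots,T\}$ with $S,K\in\{1,\ldots,T\}$ define $p^\theta_{a_1,\ldots,a_S\mid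 b_1,\ldots,b_K}(x_{a_1},\ldots,x_{a_S}\mid x_{b_1},\ldots,x_{b_K})=\frac{p^\theta_{a_1,\ldots,a_S,b_1,\ldots,b_K}(x_{a_1},\ldots,x_{b_K})}{p^\theta_{b_1,\ldots,b_K}(x_{b_1},\ldots,x_{b_K})}$. Let $\Pi\colon\mathbb{R}^d\to(0,\infty)$ with $p^\theta_T=\Pi$ for all $\theta\in\mathbb{R}^{\mathfrak d}$ (no Markov assumption is made). Let $\mathrm I_d$ be the identity and $\mathcal N(x,v,Q)=(2\pi)^{-d/2}\det(Q)^{-1/2}\exp(-\frac12(x-v)^\top Q^{-1}(x-v))$ for symmetric positive definite $Q$. Let $\sigma_1,\ldots,\sigma_T,\bar\alpha_1,\ldots,\bar\alpha_T\in(0,1)$ satisfy $\sigma_t^2\le1-\bar\alpha_{t-1}$ for all $t\in\{2,\ldots,T\}$. For every $\theta\in\mathbb{R}^{\mathfrak d}$ let $V^\theta\colon\mathbb{R}^d\times\{1,\ldots,T\}\to\mathbb{R}^d$ be a function and let $f^\theta\colon\mathbb{R}^d\times\{1,\ldots,T\}\to\mathbb{R}^d$ satisfy $f^\theta(x,t)=(\sqrt{\bar\alpha_t})^{-1}\big(x-\sqrt{1-\bar\alpha_t}\,V^\theta(x,t)\big)$. Assume for all $\theta\in\mathbb{R}^{\mathfrak d}$, $t\in\{2,\ldots,T\}$, $x_0,\ldots,x_T\in\mathbb{R}^d$: $p^\emptyset_{1,\ldots,T\mid 0}(x_1,\ldots,x_T\mid x_0)=p^\emptyset_{T\mid 0}(x_T\mid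 x_0)\prod_{s=2}^T p^\emptyset_{s-1\mid s,0}(x_{s-1}\mid x_s,x_0)$; $p^\emptyset_{T\mid 0}(x_T\mid x_0)=\mathcal N(x_T,\sqrt{\bar\alpha_T}x_0,(1-\bar\alpha_T)\mathrm I_d)$; $p^\emptyset_{t-1\mid t,0}(x_{t-1}\mid x_t,x_0)=\mathcal N\Big(x_{t-1},\sqrt{\bar\alpha_{t-1}}x_0+\sqrt{1-\bar\alpha_{t-1}-\sigma_t^2}\,\frac{x_t-\sqrt{\bar\alpha_t}x_0}{\sqrt{1-\bar\alpha_t}},\sigma_t^2\mathrm I_d\Big)$; $p^\theta(x_0,\ldots,x_T)=p^\theta_T(x_T)\prod_{s=1}^T p^\theta_{s-1\mid s}(x_{s-1}\mid x_s)$; $p^\theta_{t-1\mid t}(x_{t-1}\mid x_t)=p^\emptyset_{t-1\mid t,0}(x_{t-1}\mid x_t,f^\theta(x_t,t))$; and $p^\theta_{0\mid 1}(x_0\mid x_1)=\mathcal N(x_0,f^\theta(x_1,1),\sigma_1^2\mathrm I_d)$. *)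

theory Defs
  imports "HOL-Probability.Probability"
begin

text \<open>Trajectories (x_0,...,x_T) are represented as functions nat => real^'n; only the
values at indices 0..T matter.  A joint density p on (R^d)^(T+1) is a function on such
trajectories (it is only evaluated on arguments that are extensional on {0..T}).\<close>

definition marg :: "nat \<Rightarrow> ((nat \<Rightarrow> real^'n) \<Rightarrow> real) \<Rightarrow> nat set \<Rightarrow> (nat \<Rightarrow> real^'n) \<Rightarrow> real" where
  "marg T p A x =
     (if A = {0..T} then p (restrict x {0..T})
      else (\<integral>y. p (\<lambda>i. if i \<in> A then x i else y i) \<partial>(PiM ({0..T} - A) (\<lambda>_. lborel))))"

definition cond :: "nat \<Rightarrow> ((nat \<Rightarrow> real^'n) \<Rightarrow> real) \<Rightarrow> nat set \<Rightarrow> nat set \<Rightarrow> (nat \<Rightarrow> real^'n) \<Rightarrow> real" where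
  "cond T p A B x = marg T p (A \<union> B) x / marg T p B x"

definition gauss :: "real^'n \<Rightarrow> real^'n \<Rightarrow> real^'n^'n \<Rightarrow> real" where
  "gauss x v Q = (2 * pi) powr (- real CARD('n) / 2) * det Q powr (-1/2)
                 * exp (- (1/2) * ((x - v) \<bullet> (matrix_inv Q *v (x - v))))"

end

theory Submission imports Defs begin

lemma scaleR_mat1: "(s::real) *\<^sub>R (mat 1 :: real^'n^'n) = mat s"
  by (simp add: vec_eq_iff mat_def)

lemma mat_mult_mat: "(mat a :: real^'n^'n) ** mat b = mat (a * b)"
proof -
  have "(\<Sum>k\<in>UNIV. (if i = k then a else 0) * (if k = j then b else (0::real))) = (if i = j then a * b else 0)" for i j :: 'n
  proof -
    have "(\<Sum>k\<in>UNIV. (if i = k then a else 0) * (if k = j then b else (0::real)))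
       = (\<Sum>k\<in>UNIV. if k = i then a * (if i = j then b else 0) else 0)"
      by (rule sum.cong) auto
    also have "\<dots> = (if i = j then a * b else 0)" by simp
    finally show "(\<Sum>k\<in>UNIV. (if i = k then a else 0) * (if k = j then b else (0::real))) = (if i = j then a * b else 0)" .
  qed
  then show ?thesis by (simp add: vec_eq_iff mat_def matrix_matrix_mult_def del: sum.delta sum.delta')
qed

lemma mat_mulv: "(mat (s::real) :: real^'n^'n) *v x = s *\<^sub>R x"
proof -
  have "\<And>i. (\<Sum>j\<in>UNIV. (if i = j then s else 0) * x $ j) = s * x $ i"
    by (simp add: if_distrib[of "\<lambda>y. y * _"] sum.delta cong: if_cong)
  then show ?thesis by (simp add: vec_eq_iff mat_def matrix_vector_mult_def)
qed

lemma matrix_inv_mat: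
  assumes "(s::real) \<noteq> 0"
  shows "matrix_inv (mat s :: real^'n^'n) = mat (1/s)"
proof -
  have ex: "mat s ** mat (1/s) = (mat 1 :: real^'n^'n) \<and> mat (1/s) ** mat s = (mat 1 :: real^'n^'n)"
    using assms by (simp add: mat_mult_mat)
  show ?thesis unfolding matrix_inv_def
  proof (rule some_equality)
    fix B :: "real^'n^'n" assume B: "mat s ** B = mat 1 \<and> B ** mat s = mat 1"
    have "B = (mat (1/s) ** mat s) ** B" using ex by simp
    also have "\<dots> = mat (1/s) ** (mat s ** B)" by (simp add: matrix_mul_assoc)
    also have "\<dots> = mat (1/s)" using B by simp
    finally show "B = mat (1/s)" .
  qed (rule ex)
qed

lemma det_mat: "det (mat (s::real) :: real^'n^'n) = s ^ CARD('n)"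
  by (subst det_diagonal) (auto simp: mat_def)

lemma gauss_scalar:
  fixes z \<mu> :: "real^'n"
  assumes s: "s > 0"
  shows "gauss z \<mu> (s *\<^sub>R mat 1) = (\<Prod>b\<in>Basis. normal_density (\<mu> \<bullet> b) (sqrt s) (z \<bullet> b))"
proof -
  have card: "card (Basis :: (real^'n) set) = CARD('n)" by simp
  have q0: "(z - \<mu>) \<bullet> (z - \<mu>) = (\<Sum>b\<in>Basis. ((z - \<mu>) \<bullet> b)^2)"
    by (simp add: euclidean_inner[of "z - \<mu>" "z - \<mu>"] power2_eq_square)
  have q: "(z - \<mu>) \<bullet> ((1/s) *\<^sub>R (z - \<mu>)) = (\<Sum>b\<in>Basis. (z \<bullet> b - \<mu> \<bullet> b)^2) / s"
    using q0 by (simp add: inner_diff_left)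
  have c1: "(2 * pi) powr (- real CARD('n) / 2) * (s ^ CARD('n)) powr (-1/2)
      = (1 / sqrt (2 * pi * s)) ^ CARD('n)"
  proof -
    have "(s ^ CARD('n)) powr (-1/2) = s powr (real CARD('n) * (-1/2))"
      using s by (simp add: powr_realpow[symmetric] powr_powr)
    moreover have "(1 / sqrt (2 * pi * s)) ^ CARD('n) = (2 * pi * s) powr (real CARD('n) * (-1/2))"
    proof -
      have "1 / sqrt (2 * pi * s) = (2 * pi * s) powr (-1/2)"
        using s by (simp add: powr_minus_divide powr_half_sqrt[symmetric])
      then show ?thesis using s by (simp add: powr_power)
    qed
    ultimately show ?thesis using s by (simp add: powr_mult)
  qed
  have "gauss z \<mu> (s *\<^sub>R mat 1) = (1 / sqrt (2 * pi * s)) ^ CARD('n)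
        * exp (- (1/2) * ((\<Sum>b\<in>Basis. (z \<bullet> b - \<mu> \<bullet> b)^2) / s))"
    using s c1 q by (simp add: gauss_def scaleR_mat1 det_mat matrix_inv_mat mat_mulv del: inner_diff_left inner_diff_right)
  also have "\<dots> = (\<Prod>b\<in>Basis. 1 / sqrt (2 * pi * s) * exp (- ((z \<bullet> b - \<mu> \<bullet> b)^2) / (2 * s)))"
  proof -
    have "- (1/2) * ((\<Sum>b\<in>Basis. (z \<bullet> b - \<mu> \<bullet> b)^2) / s) = (\<Sum>b\<in>(Basis::(real^'n) set). - ((z \<bullet> b - \<mu> \<bullet> b)^2) / (2 * s))"
      by (simp add: sum_divide_distrib sum_negf mult.commute)
    then show ?thesis
      by (simp only: prod.distrib prod_constant exp_sum[OF finite_Basis] card)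
  qed
  also have "\<dots> = (\<Prod>b\<in>Basis. normal_density (\<mu> \<bullet> b) (sqrt s) (z \<bullet> b))"
    using s by (simp add: normal_density_def)
  finally show ?thesis .
qed

lemma nd_shift: "normal_density \<mu> \<sigma> x = normal_density 0 \<sigma> (x - \<mu>)"
  by (simp add: normal_density_def)

lemma nn_integral_nd: "\<sigma> > 0 \<Longrightarrow> (\<integral>\<^sup>+y. ennreal (normal_density m \<sigma> y) \<partial>lborel) = 1"
  by (subst nn_integral_eq_integral) auto

lemma conv1:
  assumes s: "s > 0" and v: "v > 0"
  shows "(\<integral>\<^sup>+y. ennreal (normal_density (a + c * y) (sqrt s) z * normal_density m (sqrt v) y) \<partial>lborel)
       = ennreal (normal_density (a + c * m) (sqrt (s + c^2 * v)) z)"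
proof (cases "c = 0")
  case True
  have "(\<integral>\<^sup>+y. ennreal (normal_density (a + c * y) (sqrt s) z * normal_density m (sqrt v) y) \<partial>lborel)
     = (\<integral>\<^sup>+y. ennreal (normal_density a (sqrt s) z) * ennreal (normal_density m (sqrt v) y) \<partial>lborel)"
    using True by (simp add: ennreal_mult)
  also have "\<dots> = ennreal (normal_density a (sqrt s) z)"
    using v by (simp add: nn_integral_cmult nn_integral_nd)
  finally show ?thesis using True by simp
next
  case False
  define w where "w = z - a - c * m"
  let ?f = "\<lambda>y. ennreal (normal_density (a + c * y) (sqrt s) z * normal_density m (sqrt v) y)"
  have "(\<integral>\<^sup>+y. ?f y \<partial>lborel) = \<bar>1/c\<bar> * (\<integral>\<^sup>+u. ?f (m + (1/c) * u) \<partial>lborel)"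
  proof (rule nn_integral_real_affine)
    show "?f \<in> borel_measurable borel" unfolding normal_density_def by measurable
  qed (use False in auto)
  also have "\<dots> = (\<integral>\<^sup>+u. ennreal (normal_density 0 (sqrt s) (w - u) * normal_density 0 (\<bar>c\<bar> * sqrt v) u) \<partial>lborel)"
  proof -
    have eq: "\<bar>1/c\<bar> * (normal_density (a + c * (m + (1/c) * u)) (sqrt s) z * normal_density m (sqrt v) (m + (1/c) * u))
        = normal_density 0 (sqrt s) (w - u) * normal_density 0 (\<bar>c\<bar> * sqrt v) u" for u
    proof -
      have "normal_density (a + c * (m + (1/c) * u)) (sqrt s) z = normal_density 0 (sqrt s) (w - u)"
        using False by (simp add: normal_density_def w_def algebra_simps)
      moreover have "\<bar>1/c\<bar> * normal_density m (sqrt v) (m + (1/c) * u) = normal_density 0 (\<bar>c\<bar> * sqrt v) u"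
        using False v by (simp add: normal_density_def power_mult_distrib real_sqrt_mult power_divide field_simps)
      ultimately show ?thesis by (metis mult.left_commute)
    qed
    have m: "(\<lambda>u. ?f (m + (1/c) * u)) \<in> borel_measurable borel" unfolding normal_density_def by measurable
    have "\<bar>1/c\<bar> * (\<integral>\<^sup>+u. ?f (m + (1/c) * u) \<partial>lborel) = (\<integral>\<^sup>+u. ennreal \<bar>1/c\<bar> * ?f (m + (1/c) * u) \<partial>lborel)"
      using m by (simp add: nn_integral_cmult)
    also have "\<dots> = (\<integral>\<^sup>+u. ennreal (normal_density 0 (sqrt s) (w - u) * normal_density 0 (\<bar>c\<bar> * sqrt v) u) \<partial>lborel)"
      by (rule nn_integral_cong) (simp add: ennreal_mult[symmetric] eq[symmetric])
    finally show ?thesis .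
  qed
  also have "\<dots> = ennreal (normal_density 0 (sqrt ((sqrt s)\<^sup>2 + (\<bar>c\<bar> * sqrt v)\<^sup>2)) w)"
  proof -
    have "sqrt s > 0" "\<bar>c\<bar> * sqrt v > 0" using s v False by auto
    from conv_normal_density_zero_mean[OF this] show ?thesis by (metis (no_types))
  qed
  also have "\<dots> = ennreal (normal_density (a + c * m) (sqrt (s + c^2 * v)) z)"
    using s v by (simp add: nd_shift[of "a + c * m"] w_def power_mult_distrib algebra_simps)
  finally show ?thesis .
qed


lemma gauss_conv:
  fixes z a m :: "real^'n"
  assumes s: "s > 0" and v: "v > 0"
  shows "(\<integral>\<^sup>+y. ennreal (gauss z (a + c *\<^sub>R y) (s *\<^sub>R mat 1) * gauss y m (v *\<^sub>R mat 1)) \<partial>lborel)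
       = ennreal (gauss z (a + c *\<^sub>R m) ((s + c^2 * v) *\<^sub>R mat 1))"
proof -
  define F where "F b u = ennreal (normal_density (a \<bullet> b + c * u) (sqrt s) (z \<bullet> b) * normal_density (m \<bullet> b) (sqrt v) u)" for b u
  have pt: "ennreal (gauss z (a + c *\<^sub>R y) (s *\<^sub>R mat 1) * gauss y m (v *\<^sub>R mat 1)) = (\<Prod>b\<in>Basis. F b (y \<bullet> b))" for y
  proof -
    have "gauss z (a + c *\<^sub>R y) (s *\<^sub>R mat 1) * gauss y m (v *\<^sub>R mat 1)
        = (\<Prod>b\<in>Basis. normal_density (a \<bullet> b + c * (y \<bullet> b)) (sqrt s) (z \<bullet> b) * normal_density (m \<bullet> b) (sqrt v) (y \<bullet> b))"
      using s v by (simp add: gauss_scalar prod.distrib inner_add_left)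
    then show ?thesis unfolding F_def
      by (simp add: prod_ennreal)
  qed
  have "(\<integral>\<^sup>+y. ennreal (gauss z (a + c *\<^sub>R y) (s *\<^sub>R mat 1) * gauss y m (v *\<^sub>R mat 1)) \<partial>lborel)
      = (\<integral>\<^sup>+y. (\<Prod>b\<in>Basis. F b (y \<bullet> b)) \<partial>lborel)"
    by (simp add: pt)
  also have "\<dots> = (\<Prod>b\<in>Basis. (\<integral>\<^sup>+u. F b u \<partial>lborel))"
    by (rule nn_integral_lborel_prod) (auto simp: F_def normal_density_def)
  also have "\<dots> = (\<Prod>b\<in>(Basis::(real^'n) set). ennreal (normal_density ((a + c *\<^sub>R m) \<bullet> b) (sqrt (s + c^2 * v)) (z \<bullet> b)))"
    unfolding F_def using s v by (simp add: conv1 inner_add_left)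
  also have "\<dots> = ennreal (gauss z (a + c *\<^sub>R m) ((s + c^2 * v) *\<^sub>R mat 1))"
  proof -
    have "s + c^2 * v > 0" using s v by (simp add: add_pos_nonneg)
    then show ?thesis by (simp add: gauss_scalar prod_ennreal)
  qed
  finally show ?thesis .
qed

lemma gauss_meas:
  fixes z a m :: "real^'n"
  assumes s: "s > 0" and v: "v > 0"
  shows "(\<lambda>u. ennreal (gauss z (a + c *\<^sub>R u) (s *\<^sub>R mat 1) * gauss u m (v *\<^sub>R mat 1))) \<in> borel_measurable lborel"
proof -
  have "(\<lambda>u::real^'n. ennreal ((\<Prod>b\<in>Basis. normal_density ((a + c *\<^sub>R u) \<bullet> b) (sqrt s) (z \<bullet> b)) * (\<Prod>b\<in>Basis. normal_density (m \<bullet> b) (sqrt v) (u \<bullet> b)))) \<in> borel_measurable lborel"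
    unfolding normal_density_def by measurable
  then show ?thesis using s v by (simp only: gauss_scalar)
qed

lemma gauss_scalar_pos:
  fixes z \<mu> :: "real^'n"
  assumes "s > 0" shows "gauss z \<mu> (s *\<^sub>R mat 1) > 0"
  using assms by (simp add: gauss_scalar normal_density_pos prod_pos)


definition Nn :: "nat \<Rightarrow> ((nat \<Rightarrow> real^'n) \<Rightarrow> real) \<Rightarrow> nat set \<Rightarrow> (nat \<Rightarrow> real^'n) \<Rightarrow> ennreal" where
  "Nn T q A x = (if A = {0..T} then ennreal (q (restrict x {0..T}))
     else (\<integral>\<^sup>+y. ennreal (q (\<lambda>i. if i \<in> A then x i else y i)) \<partial>(PiM ({0..T} - A) (\<lambda>_. lborel))))"

lemma psf: "product_sigma_finite (\<lambda>_::nat. (lborel :: (real^'n) measure))"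
  by (simp add: product_sigma_finite_def lborel.sigma_finite_measure_axioms)

lemma meas_g:
  assumes "A \<subseteq> {0..T}"
  shows "(\<lambda>y. (\<lambda>i. if i \<in> A then x i else y i)) \<in> measurable (PiM ({0..T} - A) (\<lambda>_. (lborel :: (real^'n) measure))) (PiM {0..T} (\<lambda>_. lborel))"
proof (rule measurable_PiM_single'[where f = "\<lambda>i y. if i \<in> A then x i else y i"])
  fix i assume "i \<in> {0..T}"
  then show "(\<lambda>y. if i \<in> A then x i else y i) \<in> measurable (PiM ({0..T} - A) (\<lambda>_. lborel)) lborel"
    by (cases "i \<in> A") auto
next
  show "(\<lambda>y i. if i \<in> A then x i else y i) \<in> space (PiM ({0..T} - A) (\<lambda>_. lborel)) \<rightarrow> (\<Pi>\<^sub>E i\<in>{0..T}. space (lborel :: (real^'n) measure))"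
    using assms by (auto simp: space_PiM PiE_def extensional_def)
qed

lemma marg_Nn:
  fixes q :: "(nat \<Rightarrow> real^'n) \<Rightarrow> real"
  assumes qm: "q \<in> borel_measurable (PiM {0..T} (\<lambda>_. lborel))" and qp: "\<And>x. q x > 0"
    and A: "A \<subseteq> {0..T}"
  shows "marg T q A x = enn2real (Nn T q A x)"
proof (cases "A = {0..T}")
  case True then show ?thesis using qp by (simp add: marg_def Nn_def less_imp_le)
next
  case False
  have "(\<lambda>y. q (\<lambda>i. if i \<in> A then x i else y i)) \<in> borel_measurable (PiM ({0..T} - A) (\<lambda>_. lborel))"
    using measurable_comp[OF meas_g[OF A] qm] by (simp add: comp_def)
  then show ?thesis using False qp
    by (simp add: marg_def Nn_def integral_eq_nn_integral less_imp_le)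
qed

lemma Nn_upd:
  assumes "A \<subseteq> {0..T}" "j \<notin> A"
  shows "Nn T q A (x(j := u)) = Nn T q A x"
proof (cases "A = {0..T}")
  case True
  then have "restrict (x(j := u)) {0..T} = restrict x {0..T}" using assms by (auto simp: restrict_def)
  then show ?thesis using True by (simp add: Nn_def)
next
  case False
  have "(\<lambda>i. if i \<in> A then (x(j := u)) i else y i) = (\<lambda>i. if i \<in> A then x i else y i)" for y
    using assms by auto
  then show ?thesis using False by (simp add: Nn_def)
qed

lemma Nn_split:
  fixes q :: "(nat \<Rightarrow> real^'n) \<Rightarrow> real"
  assumes qm[measurable]: "q \<in> borel_measurable (PiM {0..T} (\<lambda>_. lborel))"
    and A: "A \<subseteq> {0..T}" and j: "j \<in> {0..T}" "j \<notin> A"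
  shows "Nn T q A x = (\<integral>\<^sup>+u. Nn T q (insert j A) (x(j := u)) \<partial>lborel)"
proof -
  interpret P: product_sigma_finite "\<lambda>_::nat. (lborel :: (real^'n) measure)" by (rule psf)
  have AT: "A \<noteq> {0..T}" using j by auto
  show ?thesis
  proof (cases "insert j A = {0..T}")
    case True
    have J: "{0..T} - A = {j}" using True j by auto
    let ?h = "\<lambda>u. ennreal (q (restrict (x(j := u)) {0..T}))"
    have rm: "(\<lambda>u. restrict (x(j := u)) {0..T}) \<in> measurable (lborel :: (real^'n) measure) (PiM {0..T} (\<lambda>_. lborel))"
    proof (rule measurable_restrict)
      fix i show "(\<lambda>u. (x(j := u)) i) \<in> measurable (lborel :: (real^'n) measure) lborel"
        by (cases "i = j") auto
    qed
    have hm: "?h \<in> borel_measurable lborel"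
      using measurable_comp[OF rm qm] by (simp add: comp_def)
    have "Nn T q A x = (\<integral>\<^sup>+y. ennreal (q (\<lambda>i. if i \<in> A then x i else y i)) \<partial>(PiM {j} (\<lambda>_. lborel)))"
      using AT J by (simp add: Nn_def)
    also have "\<dots> = (\<integral>\<^sup>+y. ?h (y j) \<partial>(PiM {j} (\<lambda>_. lborel)))"
    proof (rule nn_integral_cong)
      fix y assume "y \<in> space (PiM {j} (\<lambda>_. (lborel :: (real^'n) measure)))"
      then have y: "\<And>i. i \<noteq> j \<Longrightarrow> y i = undefined" by (auto simp: space_PiM PiE_def extensional_def)
      have "(\<lambda>i. if i \<in> A then x i else y i) = restrict (x(j := y j)) {0..T}"
        using True j y A by (auto simp: restrict_def fun_eq_iff)
      then show "ennreal (q (\<lambda>i. if i \<in> A then x i else y i)) = ?h (y j)" by simp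
    qed
    also have "\<dots> = (\<integral>\<^sup>+u. ?h u \<partial>lborel)"
      by (rule P.product_nn_integral_singleton[OF hm])
    also have "\<dots> = (\<integral>\<^sup>+u. Nn T q (insert j A) (x(j := u)) \<partial>lborel)"
      using True by (simp add: Nn_def)
    finally show ?thesis .
  next
    case False
    define J' where "J' = {0..T} - insert j A"
    have J: "{0..T} - A = insert j J'" "j \<notin> J'" "finite J'" using j by (auto simp: J'_def)
    let ?f = "\<lambda>y. ennreal (q (\<lambda>i. if i \<in> A then x i else y i))"
    have fm: "?f \<in> borel_measurable (PiM (insert j J') (\<lambda>_. lborel))"
      using measurable_comp[OF meas_g[OF A] qm] J(1) by (simp add: comp_def)
    have "Nn T q A x = (\<integral>\<^sup>+y. ?f y \<partial>(PiM (insert j J') (\<lambda>_. lborel)))"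
      using AT J by (simp add: Nn_def)
    also have "\<dots> = (\<integral>\<^sup>+u. (\<integral>\<^sup>+y. ?f (y(j := u)) \<partial>(PiM J' (\<lambda>_. lborel))) \<partial>lborel)"
      by (rule P.product_nn_integral_insert_rev[OF J(3) J(2) fm])
    also have "\<dots> = (\<integral>\<^sup>+u. Nn T q (insert j A) (x(j := u)) \<partial>lborel)"
    proof (rule nn_integral_cong)
      fix u
      have "(\<lambda>i. if i \<in> A then x i else (y(j := u)) i) = (\<lambda>i. if i \<in> insert j A then (x(j := u)) i else y i)" for y
        using j by auto
      then show "(\<integral>\<^sup>+y. ?f (y(j := u)) \<partial>(PiM J' (\<lambda>_. lborel))) = Nn T q (insert j A) (x(j := u))"
        using False by (simp add: Nn_def J'_def)
    qed
    finally show ?thesis .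
  qed
qed


lemma step:
  fixes q :: "(nat \<Rightarrow> real^'n) \<Rightarrow> real" and sigma abar :: "nat \<Rightarrow> real"
  assumes qm: "q \<in> borel_measurable (PiM {0..T} (\<lambda>_. lborel))" and qp: "\<And>x. q x > 0"
    and m0pos: "\<And>x. marg T q {0} x > 0"
    and t: "2 \<le> t" "t \<le> T"
    and IH: "\<And>x. cond T q {t} {0} x = gauss (x t) (sqrt (abar t) *\<^sub>R x 0) ((1 - abar t) *\<^sub>R mat 1)"
    and rev: "\<And>x. cond T q {t - 1} {t, 0} x
        = gauss (x (t - 1))
            (sqrt (abar (t - 1)) *\<^sub>R x 0
             + sqrt (1 - abar (t - 1) - (sigma t)\<^sup>2) *\<^sub>R
                 ((1 / sqrt (1 - abar t)) *\<^sub>R (x t - sqrt (abar t) *\<^sub>R x 0)))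
            ((sigma t)\<^sup>2 *\<^sub>R mat 1)"
    and sig: "0 < sigma t" and ab: "0 < abar t" "abar t < 1" and ab': "0 < abar (t - 1)" "abar (t - 1) < 1"
    and sle: "(sigma t)\<^sup>2 \<le> 1 - abar (t - 1)"
  shows "cond T q {t - 1} {0} x = gauss (x (t - 1)) (sqrt (abar (t - 1)) *\<^sub>R x 0) ((1 - abar (t - 1)) *\<^sub>R mat 1)"
proof -
  define t' where "t' = t - 1"
  have t't: "t' \<noteq> t" "t' \<noteq> 0" "t \<noteq> 0" "t' \<le> T" using t by (auto simp: t'_def)
  define M0 where "M0 = marg T q {0} x"
  have M0: "M0 > 0" using m0pos by (simp add: M0_def)
  define k where "k = sqrt (1 - abar t' - (sigma t)\<^sup>2)"
  define c where "c = k / sqrt (1 - abar t)"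
  define a where "a = sqrt (abar t') *\<^sub>R x 0 - (c * sqrt (abar t)) *\<^sub>R x 0"
  define s where "s = (sigma t)\<^sup>2"
  define v where "v = 1 - abar t"
  have sv: "s > 0" "v > 0" using sig ab by (auto simp: s_def v_def)
  have Tsets: "{t', 0} \<subseteq> {0..T}" "insert t {t', 0} \<subseteq> {0..T}" "{t, 0} \<subseteq> {0..T}" "{0} \<subseteq> {0..T}"
    using t't t by auto
  have P: "Nn T q (insert t {t', 0}) (x(t := u))
      = ennreal (gauss (x t') (a + c *\<^sub>R u) (s *\<^sub>R mat 1) * gauss u (sqrt (abar t) *\<^sub>R x 0) (v *\<^sub>R mat 1)) * ennreal M0" for u
  proof -
    let ?x = "x(t := u)"
    have m0': "marg T q {0} ?x = M0"
      using t't by (simp add: M0_def marg_Nn[OF qm qp] Nn_upd)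
    have "marg T q {t, 0} ?x = cond T q {t} {0} ?x * marg T q {0} ?x"
      using m0pos[of ?x] by (simp add: cond_def insert_commute)
    also have "\<dots> = gauss u (sqrt (abar t) *\<^sub>R x 0) (v *\<^sub>R mat 1) * M0"
      using t't by (simp add: IH m0' v_def)
    finally have mt: "marg T q {t, 0} ?x = gauss u (sqrt (abar t) *\<^sub>R x 0) (v *\<^sub>R mat 1) * M0" .
    have mtpos: "marg T q {t, 0} ?x > 0" using mt M0 sv by (simp add: gauss_scalar_pos)
    have mean: "sqrt (abar t') *\<^sub>R ?x 0 + sqrt (1 - abar t' - (sigma t)\<^sup>2) *\<^sub>R
                 ((1 / sqrt (1 - abar t)) *\<^sub>R (?x t - sqrt (abar t) *\<^sub>R ?x 0)) = a + c *\<^sub>R u"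
      using t't by (simp add: a_def c_def k_def algebra_simps)
    have "marg T q (insert t {t', 0}) ?x = cond T q {t'} {t, 0} ?x * marg T q {t, 0} ?x"
      using mtpos by (simp add: cond_def insert_commute)
    also have "\<dots> = gauss (x t') (a + c *\<^sub>R u) (s *\<^sub>R mat 1) * gauss u (sqrt (abar t) *\<^sub>R x 0) (v *\<^sub>R mat 1) * M0"
      using rev[of ?x, folded t'_def] mean t't by (simp add: s_def mt)
    finally have mm: "marg T q (insert t {t', 0}) ?x = gauss (x t') (a + c *\<^sub>R u) (s *\<^sub>R mat 1) * gauss u (sqrt (abar t) *\<^sub>R x 0) (v *\<^sub>R mat 1) * M0" .
    have pos: "marg T q (insert t {t', 0}) ?x > 0" using mm M0 sv by (simp add: gauss_scalar_pos)
    have "Nn T q (insert t {t', 0}) ?x \<noteq> \<top>"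
      using pos marg_Nn[OF qm qp Tsets(2)] by (metis enn2real_top less_irrefl)
    then have "Nn T q (insert t {t', 0}) ?x = ennreal (marg T q (insert t {t', 0}) ?x)"
      using marg_Nn[OF qm qp Tsets(2)] by (simp add: ennreal_enn2real_if)
    also have "\<dots> = ennreal (gauss (x t') (a + c *\<^sub>R u) (s *\<^sub>R mat 1) * gauss u (sqrt (abar t) *\<^sub>R x 0) (v *\<^sub>R mat 1)) * ennreal M0"
      using mm M0 sv by (simp add: ennreal_mult gauss_scalar_pos less_imp_le)
    finally show ?thesis .
  qed
  have k2: "k^2 = 1 - abar t' - s" using sle by (simp add: k_def s_def t'_def)
  have var: "s + c^2 * v = 1 - abar t'"
    using k2 ab by (simp add: c_def v_def power_divide)
  have mn: "a + (c * sqrt (abar t)) *\<^sub>R x 0 = sqrt (abar t') *\<^sub>R x 0"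
    by (simp add: a_def)
  have "Nn T q {t', 0} x = (\<integral>\<^sup>+u. Nn T q (insert t {t', 0}) (x(t := u)) \<partial>lborel)"
    using t't t by (intro Nn_split[OF qm Tsets(1)]) auto
  also have "\<dots> = (\<integral>\<^sup>+u. ennreal (gauss (x t') (a + c *\<^sub>R u) (s *\<^sub>R mat 1) * gauss u (sqrt (abar t) *\<^sub>R x 0) (v *\<^sub>R mat 1)) \<partial>lborel) * ennreal M0"
    unfolding P
    by (rule nn_integral_multc) (rule gauss_meas[OF sv])
  also have "\<dots> = ennreal (gauss (x t') (sqrt (abar t') *\<^sub>R x 0) ((1 - abar t') *\<^sub>R mat 1)) * ennreal M0"
    using gauss_conv[OF sv, of "x t'" a c "sqrt (abar t) *\<^sub>R x 0"] by (simp add: var mn)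
  finally have "Nn T q {t', 0} x = ennreal (gauss (x t') (sqrt (abar t') *\<^sub>R x 0) ((1 - abar t') *\<^sub>R mat 1) * M0)"
    using M0 ab' by (simp add: ennreal_mult gauss_scalar_pos less_imp_le t'_def)
  then have "marg T q {t', 0} x = gauss (x t') (sqrt (abar t') *\<^sub>R x 0) ((1 - abar t') *\<^sub>R mat 1) * M0"
    using marg_Nn[OF qm qp Tsets(1)] M0 ab' by (simp add: gauss_scalar_pos less_imp_le t'_def)
  moreover have "{t'} \<union> {0} = {t', 0}" by auto
  ultimately have "cond T q {t'} {0} x = gauss (x t') (sqrt (abar t') *\<^sub>R x 0) ((1 - abar t') *\<^sub>R mat 1)"
    using M0 unfolding cond_def M0_def by simp
  then show ?thesis by (simp add: t'_def)
qed

theorem lemma5p6: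
  fixes M :: "'a measure"
    and T :: nat
    and X :: "(real^'k) option \<Rightarrow> 'a \<Rightarrow> nat \<Rightarrow> real^'n"
    and p :: "(real^'k) option \<Rightarrow> (nat \<Rightarrow> real^'n) \<Rightarrow> real"
    and Pi0 :: "real^'n \<Rightarrow> real"
    and sigma abar :: "nat \<Rightarrow> real"
    and V f :: "real^'k \<Rightarrow> real^'n \<Rightarrow> nat \<Rightarrow> real^'n"
  assumes T_pos: "1 \<le> T"
    and prob: "prob_space M"
    and X_meas: "\<And>\<theta> i. i \<in> {0..T} \<Longrightarrow> (\<lambda>\<omega>. X \<theta> \<omega> i) \<in> borel_measurable M"
    and indep: "prob_space.indep_set M
        (sigma_sets (space M)
           {{\<omega> \<in> space M. X (Some \<theta>) \<omega> i \<in> A} | \<theta> i A. i \<in> {0..T} \<and> A \<in> sets borel})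
        (sigma_sets (space M)
           {{\<omega> \<in> space M. X None \<omega> i \<in> A} | i A. i \<in> {0..T} \<and> A \<in> sets borel})"
    and p_meas: "\<And>\<theta>. p \<theta> \<in> borel_measurable (PiM {0..T} (\<lambda>_. lborel))"
    and p_pos: "\<And>\<theta> x. p \<theta> x > 0"
    and p_density: "\<And>\<theta> B. (\<forall>i\<in>{0..T}. B i \<in> sets borel) \<Longrightarrow>
        emeasure M {\<omega> \<in> space M. \<forall>i\<in>{0..T}. X \<theta> \<omega> i \<in> B i}
        = (\<integral>\<^sup>+ x. indicator (PiE {0..T} B) x * ennreal (p \<theta> x) \<partial>(PiM {0..T} (\<lambda>_. lborel)))"
    and Pi_T: "\<And>\<theta> x. marg T (p (Some \<theta>)) {T} x = Pi0 (x T)"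
    and sigma_range: "\<And>t. t \<in> {1..T} \<Longrightarrow> 0 < sigma t \<and> sigma t < 1"
    and abar_range: "\<And>t. t \<in> {1..T} \<Longrightarrow> 0 < abar t \<and> abar t < 1"
    and sigma_le: "\<And>t. t \<in> {2..T} \<Longrightarrow> (sigma t)\<^sup>2 \<le> 1 - abar (t - 1)"
    and f_def: "\<And>\<theta> x t. t \<in> {1..T} \<Longrightarrow>
        f \<theta> x t = (1 / sqrt (abar t)) *\<^sub>R (x - sqrt (1 - abar t) *\<^sub>R V \<theta> x t)"
    and fwd_factor: "\<And>x. cond T (p None) {1..T} {0} x
        = cond T (p None) {T} {0} x * (\<Prod>s\<in>{2..T}. cond T (p None) {s - 1} {s, 0} x)"
    and fwd_T: "\<And>x. cond T (p None) {T} {0} x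
        = gauss (x T) (sqrt (abar T) *\<^sub>R x 0) ((1 - abar T) *\<^sub>R mat 1)"
    and fwd_rev: "\<And>t x. t \<in> {2..T} \<Longrightarrow> cond T (p None) {t - 1} {t, 0} x
        = gauss (x (t - 1))
            (sqrt (abar (t - 1)) *\<^sub>R x 0
             + sqrt (1 - abar (t - 1) - (sigma t)\<^sup>2) *\<^sub>R
                 ((1 / sqrt (1 - abar t)) *\<^sub>R (x t - sqrt (abar t) *\<^sub>R x 0)))
            ((sigma t)\<^sup>2 *\<^sub>R mat 1)"
    and bwd_factor: "\<And>\<theta> x. marg T (p (Some \<theta>)) {0..T} x
        = marg T (p (Some \<theta>)) {T} x * (\<Prod>s\<in>{1..T}. cond T (p (Some \<theta>)) {s - 1} {s} x)"
    and bwd_step: "\<And>\<theta> t x. t \<in> {2..T} \<Longrightarrow> cond T (p (Some \<theta>)) {t - 1} {t} x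
        = cond T (p None) {t - 1} {t, 0} (x(0 := f \<theta> (x t) t))"
    and bwd_0: "\<And>\<theta> x. cond T (p (Some \<theta>)) {0} {1} x
        = gauss (x 0) (f \<theta> (x 1) 1) ((sigma 1)\<^sup>2 *\<^sub>R mat 1)"
  shows "\<forall>t\<in>{1..T}. \<forall>x. cond T (p None) {t} {0} x
        = gauss (x t) (sqrt (abar t) *\<^sub>R x 0) ((1 - abar t) *\<^sub>R mat 1)"
proof -
  define G where "G t x = gauss (x t) (sqrt (abar t) *\<^sub>R x 0) ((1 - abar t) *\<^sub>R mat 1)" for t and x :: "nat \<Rightarrow> real^'n"
  have m0pos: "marg T (p None) {0} x > 0" for x
  proof -
    have "cond T (p None) {T} {0} x > 0" using fwd_T abar_range[of T] T_pos by (simp add: gauss_scalar_pos)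
    then have "marg T (p None) {0} x \<noteq> 0" by (auto simp: cond_def)
    moreover have "marg T (p None) {0} x \<ge> 0" by (simp add: marg_Nn[OF p_meas p_pos])
    ultimately show ?thesis by simp
  qed
  have main: "\<forall>x. cond T (p None) {T - n} {0} x = G (T - n) x" if "n \<le> T - 1" for n
    using that
  proof (induction n)
    case 0 show ?case using fwd_T by (simp add: G_def)
  next
    case (Suc n)
    have t: "2 \<le> T - n" "T - n \<le> T" using Suc.prems by auto
    have e: "T - Suc n = T - n - 1" by simp
    have IH: "\<And>x. cond T (p None) {T - n} {0} x = gauss (x (T - n)) (sqrt (abar (T - n)) *\<^sub>R x 0) ((1 - abar (T - n)) *\<^sub>R mat 1)"
      using Suc.IH Suc.prems by (simp add: G_def)
    have rev: "\<And>x. cond T (p None) {T - n - 1} {T - n, 0} x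
        = gauss (x (T - n - 1))
            (sqrt (abar (T - n - 1)) *\<^sub>R x 0
             + sqrt (1 - abar (T - n - 1) - (sigma (T - n))\<^sup>2) *\<^sub>R
                 ((1 / sqrt (1 - abar (T - n))) *\<^sub>R (x (T - n) - sqrt (abar (T - n)) *\<^sub>R x 0)))
            ((sigma (T - n))\<^sup>2 *\<^sub>R mat 1)"
      by (rule fwd_rev) (use t in auto)
    have r: "0 < sigma (T - n)" "0 < abar (T - n)" "abar (T - n) < 1" "0 < abar (T - n - 1)" "abar (T - n - 1) < 1"
      "(sigma (T - n))\<^sup>2 \<le> 1 - abar (T - n - 1)"
      using sigma_range[of "T - n"] abar_range[of "T - n"] abar_range[of "T - n - 1"] sigma_le[of "T - n"] t by auto
    show ?case unfolding e G_def
      using step[where q="p None" and T=T and t="T - n" and sigma=sigma and abar=abar, OF p_meas[of None] p_pos[of None] m0pos t IH rev r] by blast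
  qed
  show ?thesis
  proof (intro ballI allI)
    fix t x assume "t \<in> {1..T}"
    then have "T - (T - t) = t" "T - t \<le> T - 1" by auto
    then show "cond T (p None) {t} {0} x = gauss (x t) (sqrt (abar t) *\<^sub>R x 0) ((1 - abar t) *\<^sub>R mat 1)"
      using main[of "T - t"] by (simp add: G_def)
  qed
qed

end
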